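(* Let $q$ be a positive integer and suppose that for each divisor $d$ of $q$ we are given a function $a_d:\mathbb Z\to\mathbb C$ of period $d$ with $|a_d(n)|\le1$, such that $a_{d_1d_2}=a_{d_1}a_{d_2}$ whenever $d_1d_2\mid q$ and $\gcd(d_1,d_2)=1$. Write $q=q_1q_2\cdots q_kQ$ with $q_1,\dots,q_k,Q$ pairwise coprime. Let $I$ be an interval of length $N$ and set $M_j=\lfloor(N/q_j)^{2/3}\rfloor$ for $1\le j\le k$. Then $$\Big|\frac1N\sum_{n\in I}a_q(n)\Big|\le4\sum_{i=1}^kM_i^{-2^{-i}}+4\,\mathbf E^{1/2^k},$$ where $$\mathbf E:=\frac1{M_1^2\cdots M_k^2}\sum_{\substack{1\le h_{j,0}\ne h_{j,1}\le M_j\\ 1\le j\le k}}\Big|\frac1N\sum_{n\in I}a_{\mathbf h}(n)\Big|,$$ $$a_{\mathbf h}(n):=\prod_{\substack{j_1,\dots,j_k\in\{0,1\}\\ j_1+\cdots+j_k\ \text{even}}}a_Q\Big(n+\sum_{i=1}^kh_{i,j_i}q_i\Big)\prod_{\substack{j_1,\dots,j_k\in\{0,1\}\\ j_1+\cdots+j_k\ \text{odd}}}\overline{a_Q\Big(n+\sum_{i=1}^kh_{i,j_i}q_i\Big)}.$$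
   Context: The sums over $I$ are over integers $n\in I$; $\mathbf h$ denotes the tuple $(h_{i,j})_{1\le i\le k,\,j\in\{0,1\}}$. *)

theory Defs
  imports "HOL-Analysis.Analysis" "HOL-Library.FuncSet"
begin

definition intv :: "int \<Rightarrow> nat \<Rightarrow> int set" where
  "intv m N = {m + 1 .. m + int N}"

definition Mpar :: "nat \<Rightarrow> nat \<Rightarrow> nat" where
  "Mpar N qj = nat \<lfloor>(real N / real qj) powr (2/3)\<rfloor>"

text \<open>The twisted product a_h(n); the sign vector j ranges over {0,1}^k indexed by 1..k,
  the shift tuple h is indexed by pairs (i,j) with 1 <= i <= k, j in {0,1}.\<close>
definition a_h :: "(int \<Rightarrow> complex) \<Rightarrow> nat \<Rightarrow> (nat \<Rightarrow> nat) \<Rightarrow> (nat \<times> nat \<Rightarrow> int) \<Rightarrow> int \<Rightarrow> complex"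
  where
  "a_h aQ k qs h n =
     (\<Prod>js \<in> {js \<in> PiE {1..k} (\<lambda>_. {0,1::nat}). even (\<Sum>i=1..k. js i)}.
         aQ (n + (\<Sum>i=1..k. h (i, js i) * int (qs i)))) *
     (\<Prod>js \<in> {js \<in> PiE {1..k} (\<lambda>_. {0,1::nat}). odd (\<Sum>i=1..k. js i)}.
         cnj (aQ (n + (\<Sum>i=1..k. h (i, js i) * int (qs i)))))"

definition Hset :: "nat \<Rightarrow> (nat \<Rightarrow> nat) \<Rightarrow> (nat \<times> nat \<Rightarrow> int) set" where
  "Hset k M = {h \<in> PiE ({1..k} \<times> {0,1}) (\<lambda>(i,j). {1 .. int (M i)}).
                  \<forall>i\<in>{1..k}. h (i,0) \<noteq> h (i,1)}"

definition Ebold :: "(int \<Rightarrow> complex) \<Rightarrow> nat \<Rightarrow> (nat \<Rightarrow> nat) \<Rightarrow> (nat \<Rightarrow> nat) \<Rightarrow> int set \<Rightarrow> nat \<Rightarrow> real"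
  where
  "Ebold aQ k qs M I N =
     (1 / (\<Prod>i=1..k. real (M i) ^ 2)) *
     (\<Sum>h \<in> Hset k M. norm ((1 / real N) * (\<Sum>n\<in>I. a_h aQ k qs h n)))"

end

theory Submission
  imports Defs
begin

lemma sum_intv_nat: "(\<Sum>n\<in>intv m N. F n) = (\<Sum>i<N. F (m + 1 + int i))"
proof -
  have "intv m N = (\<lambda>i. m + 1 + int i) ` {..<N}"
    unfolding intv_def
  proof (intro set_eqI iffI)
    fix x assume "x \<in> {m + 1..m + int N}"
    then show "x \<in> (\<lambda>i. m + 1 + int i) ` {..<N}"
      by (intro image_eqI[of _ _ "nat (x - m - 1)"]) auto
  qed auto
  moreover have "inj_on (\<lambda>i. m + 1 + int i) {..<N}" by (auto simp: inj_on_def)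
  ultimately show ?thesis by (simp add: sum.reindex)
qed

lemma shift_bound:
  fixes F :: "int \<Rightarrow> complex"
  assumes "\<And>n. norm (F n) \<le> 1"
  shows "norm ((\<Sum>n\<in>intv m N. F (n + int t)) - (\<Sum>n\<in>intv m N. F n)) \<le> 2 * real t"
proof (induction t)
  case 0 then show ?case by simp
next
  case (Suc t)
  define G where "G = (\<lambda>s. \<Sum>i<N. F (m + 1 + int i + int s))"
  have eq: "(\<Sum>n\<in>intv m N. F (n + int s)) = G s" for s
    unfolding G_def sum_intv_nat by simp
  have "G (Suc t) - G t = (\<Sum>i<N. F (m + 1 + int (Suc i) + int t) - F (m + 1 + int i + int t))"
    unfolding G_def sum_subtractf[symmetric] by (intro sum.cong) (auto simp: algebra_simps)
  also have "\<dots> = F (m + 1 + int N + int t) - F (m + 1 + int 0 + int t)"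
    by (rule sum_lessThan_telescope[where f = "\<lambda>i. F (m + 1 + int i + int t)"])
  finally have "norm (G (Suc t) - G t) \<le> 2"
    using assms[of "m + 1 + int N + int t"] assms[of "m + 1 + int 0 + int t"]
    by (metis norm_triangle_ineq4 order_trans add_mono one_add_one)
  moreover have "norm (G t - G 0) \<le> 2 * real t" using Suc eq[of t] eq[of 0] by simp
  ultimately have "norm (G (Suc t) - G 0) \<le> 2 * real (Suc t)"
    using norm_triangle_ineq[of "G (Suc t) - G t" "G t - G 0"] by simp
  then show ?case using eq[of "Suc t"] eq[of 0] by simp
qed

lemma card_intv[simp]: "card (intv m N) = N"
  unfolding intv_def by simp

lemma finite_intv[simp]: "finite (intv m N)"
  unfolding intv_def by simp

definition Dset :: "nat \<Rightarrow> (int \<times> int) set" where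
  "Dset M = {p \<in> {1..int M} \<times> {1..int M}. fst p \<noteq> snd p}"

lemma per_mult:
  fixes f :: "int \<Rightarrow> complex"
  assumes "\<And>n. f (n + int q) = f n"
  shows "f (n + int k * int q) = f n"
proof (induction k)
  case (Suc k)
  have "f (n + int (Suc k) * int q) = f ((n + int k * int q) + int q)" by (simp add: algebra_simps)
  then show ?case using assms Suc by simp
qed simp

lemma vdc:
  fixes f b :: "int \<Rightarrow> complex" and q M N :: nat
  assumes fper: "\<And>n. f (n + int q) = f n" and fb: "\<And>n. norm (f n) \<le> 1"
    and bb: "\<And>n. norm (b n) \<le> 1"
    and M1: "M \<ge> 1" and MN: "real M powr (3/2) * real q \<le> real N" and Npos: "N > 0"
  shows "norm (1 / real N * (\<Sum>n\<in>intv m N. f n * b n)) \<le> 3 * real M powr (-1/2) +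
     sqrt (1 / real M ^ 2 * (\<Sum>p\<in>Dset M. norm (1 / real N *
        (\<Sum>n\<in>intv m N. b (n + fst p * int q) * cnj (b (n + snd p * int q))))))"
proof -
  define I where "I = intv m N"
  define H where "H = {1..int M}"
  define S where "S = (\<Sum>n\<in>I. f n * b n)"
  define Sh where "Sh = (\<lambda>h. \<Sum>n\<in>I. f n * b (n + h * int q))"
  define B where "B = (\<lambda>n. 1 / of_nat M * (\<Sum>h\<in>H. b (n + h * int q)))"
  define T where "T = (\<Sum>n\<in>I. f n * B n)"
  define c where "c = (\<lambda>p n. b (n + fst p * int q) * cnj (b (n + snd p * int q)))"
  define E1 where "E1 = 1 / real M ^ 2 * (\<Sum>p\<in>Dset M. norm (1 / real N * (\<Sum>n\<in>I. c p n)))"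
  have cardH: "card H = M" unfolding H_def by simp
  have finH: "finite H" unfolding H_def by simp
  have Mpos: "real M > 0" using M1 by simp
  have E1nn: "E1 \<ge> 0" unfolding E1_def by (intro mult_nonneg_nonneg sum_nonneg) auto
  have shift: "norm (S - Sh h) \<le> 2 * real M * real q" if hH: "h \<in> H" for h
  proof -
    obtain k :: nat where k: "h = int k" using hH unfolding H_def
      by (metis atLeastAtMost_iff nonneg_int_cases order_trans zero_le_one)
    have kM: "k \<le> M" using hH k unfolding H_def by simp
    have "Sh h = (\<Sum>n\<in>I. f (n + int (k * q)) * b (n + int (k * q)))"
      unfolding Sh_def k using per_mult[of f q, OF fper] by (intro sum.cong) (auto simp: algebra_simps)
    then have "norm (Sh h - S) \<le> 2 * real (k * q)"
      unfolding S_def I_def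
      using shift_bound[where F="\<lambda>n. f n * b n" and m=m and N=N and t="k * q"] fb bb
      by (simp add: norm_mult mult_le_one)
    also have "\<dots> \<le> 2 * real M * real q" using kM by (simp add: mult_right_mono)
    finally show ?thesis by (simp add: norm_minus_commute)
  qed
  have T_eq: "T = 1 / of_nat M * (\<Sum>h\<in>H. Sh h)"
    unfolding T_def B_def Sh_def
    by (simp add: sum_distrib_left sum_distrib_right mult_ac sum.swap[of _ H I])
  have "S - T = 1 / of_nat M * (\<Sum>h\<in>H. S - Sh h)"
    using T_eq cardH Mpos by (simp add: sum_subtractf field_simps)
  moreover have "norm (\<Sum>h\<in>H. S - Sh h) \<le> (\<Sum>h\<in>H. 2 * real M * real q)"
    by (intro order_trans[OF norm_sum] sum_mono shift)
  ultimately have "norm (S - T) \<le> real M * (2 * real M * real q) / real M"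
    using cardH Mpos by (simp add: norm_divide pos_divide_le_eq mult_ac)
  also have "\<dots> = 2 * real M * real q" using Mpos by simp
  finally have err: "norm (S - T) \<le> 2 * real M * real q" .
  have T1: "norm T \<le> (\<Sum>n\<in>I. norm (B n))"
    unfolding T_def
    by (intro order_trans[OF norm_sum] sum_mono) (auto simp: norm_mult intro: mult_left_le_one_le fb)
  have T2: "(\<Sum>n\<in>I. norm (B n)) ^ 2 \<le> (\<Sum>n\<in>I. norm (B n) ^ 2) * real N"
    using sum_squared_le_sum_of_squares[of "\<lambda>n. norm (B n)" I] unfolding I_def by simp
  have Bsq: "of_real (norm (B n) ^ 2) = 1 / of_nat M ^ 2 * (\<Sum>p\<in>H \<times> H. c p n)" for n
  proof -
    have "of_real (norm (B n) ^ 2) = B n * cnj (B n)" by (rule complex_norm_square)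
    also have "\<dots> = 1 / of_nat M ^ 2 * ((\<Sum>h\<in>H. b (n + h * int q)) * (\<Sum>h\<in>H. cnj (b (n + h * int q))))"
      unfolding B_def by (simp add: power2_eq_square)
    also have "\<dots> = 1 / of_nat M ^ 2 * (\<Sum>p\<in>H \<times> H. c p n)"
      unfolding sum_product c_def sum.cartesian_product by (simp add: case_prod_beta)
    finally show ?thesis .
  qed
  have "of_real (\<Sum>n\<in>I. norm (B n) ^ 2) = (\<Sum>n\<in>I. of_real (norm (B n) ^ 2))"
    by (rule of_real_sum)
  also have "\<dots> = (\<Sum>n\<in>I. 1 / of_nat M ^ 2 * (\<Sum>p\<in>H \<times> H. c p n))"
    by (rule sum.cong[OF refl Bsq])
  also have "\<dots> = 1 / of_nat M ^ 2 * (\<Sum>n\<in>I. \<Sum>p\<in>H \<times> H. c p n)"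
    by (rule sum_distrib_left[symmetric])
  also have "(\<Sum>n\<in>I. \<Sum>p\<in>H \<times> H. c p n) = (\<Sum>p\<in>H \<times> H. \<Sum>n\<in>I. c p n)"
    by (rule sum.swap)
  finally have "of_real (\<Sum>n\<in>I. norm (B n) ^ 2) = 1 / of_nat M ^ 2 * (\<Sum>p\<in>H \<times> H. \<Sum>n\<in>I. c p n)" .
  then have eqZ: "of_real (\<Sum>n\<in>I. norm (B n) ^ 2) = 1 / of_nat M ^ 2 * (\<Sum>p\<in>H \<times> H. \<Sum>n\<in>I. c p n)" .
  define X where "X = (\<Sum>n\<in>I. norm (B n) ^ 2)"
  define Z0 where "Z0 = (\<Sum>p\<in>H \<times> H. \<Sum>n\<in>I. c p n)"
  define D0 where "D0 = (\<lambda>h. (h, h)) ` H"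
  define e where "e = (\<lambda>p. norm (\<Sum>n\<in>I. c p n))"
  have Xnn: "0 \<le> X" unfolding X_def by (intro sum_nonneg) auto
  have X1: "X = norm (1 / of_nat M ^ 2 * Z0)"
    using Xnn eqZ[symmetric] unfolding X_def Z0_def by (simp only: norm_of_real abs_of_nonneg)
  have X2: "norm (1 / of_nat M ^ 2 * Z0) = 1 / real M ^ 2 * norm Z0"
    by (simp add: norm_mult norm_divide norm_power)
  have HH: "H \<times> H = D0 \<union> Dset M"
    unfolding Dset_def H_def D0_def by auto
  have split: "Z0 = (\<Sum>p\<in>D0. \<Sum>n\<in>I. c p n) + (\<Sum>p\<in>Dset M. \<Sum>n\<in>I. c p n)"
    unfolding Z0_def HH by (rule sum.union_disjoint) (auto simp: Dset_def H_def D0_def)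
  have bdiag: "norm (\<Sum>p\<in>D0. \<Sum>n\<in>I. c p n) \<le> real M * real N"
  proof -
    have "norm (\<Sum>p\<in>D0. \<Sum>n\<in>I. c p n) \<le> (\<Sum>p\<in>D0. \<Sum>n\<in>I. (1::real))"
      by (intro order_trans[OF norm_sum] sum_mono order_trans[OF norm_sum] sum_mono)
         (auto simp: c_def norm_mult intro: mult_le_one bb)
    also have "\<dots> = real M * real N"
      using cardH unfolding D0_def by (simp add: card_image inj_on_def I_def)
    finally show ?thesis .
  qed
  have bD: "norm (\<Sum>p\<in>Dset M. \<Sum>n\<in>I. c p n) \<le> (\<Sum>p\<in>Dset M. e p)"
    unfolding e_def by (rule norm_sum)
  have E1e: "E1 = 1 / real M ^ 2 * ((\<Sum>p\<in>Dset M. e p) / real N)"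
  proof -
    have en: "norm (1 / real N * (\<Sum>n\<in>I. c p n)) = e p / real N" for p
      unfolding e_def norm_mult by (simp add: norm_divide)
    show ?thesis by (simp only: E1_def en sum_divide_distrib)
  qed
  have "norm Z0 \<le> real M * real N + (\<Sum>p\<in>Dset M. e p)"
    unfolding split by (rule order_trans[OF norm_triangle_ineq add_mono[OF bdiag bD]])
  then have "X \<le> 1 / real M ^ 2 * (real M * real N + (\<Sum>p\<in>Dset M. e p))"
    unfolding X1 X2 by (rule mult_left_mono) simp
  also have "1 / real M ^ 2 * (real M * real N + (\<Sum>p\<in>Dset M. e p)) = real N * (1 / real M + E1)"
    unfolding E1e using Mpos Npos by (simp add: field_simps power2_eq_square)
  finally have sq: "(\<Sum>n\<in>I. norm (B n) ^ 2) \<le> real N * (1 / real M + E1)"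
    unfolding X_def .
  have "norm T ^ 2 \<le> real N ^ 2 * (1 / real M + E1)"
  proof -
    have "norm T ^ 2 \<le> (\<Sum>n\<in>I. norm (B n)) ^ 2" using T1 by (simp add: power_mono)
    also have "\<dots> \<le> (real N * (1 / real M + E1)) * real N"
      using T2 sq by (meson mult_right_mono of_nat_0_le_iff order_trans)
    finally show ?thesis by (simp add: power2_eq_square mult_ac)
  qed
  then have "norm T \<le> sqrt (real N ^ 2 * (1 / real M + E1))"
    by (rule real_le_rsqrt)
  also have "\<dots> = real N * sqrt (1 / real M + E1)"
    by (simp add: real_sqrt_mult)
  also have "sqrt (1 / real M + E1) \<le> sqrt (1 / real M) + sqrt E1"
    using E1nn Mpos by (intro sqrt_add_le_add_sqrt) auto
  finally have "norm T \<le> real N * (sqrt (1 / real M) + sqrt E1)"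
    using Npos by (simp add: mult_left_mono)
  then have Tb: "norm T / real N \<le> sqrt (1 / real M) + sqrt E1"
    using Npos by (simp add: pos_divide_le_eq mult.commute)
  have sM: "sqrt (real M) > 0" using Mpos by simp
  have sq1: "sqrt (1 / real M) = real M powr (-1/2)"
  proof -
    have "real M powr (-1/2) = 1 / real M powr (1/2)" using powr_minus_divide[of "real M" "1/2"] by simp
    then show ?thesis using Mpos by (simp add: powr_half_sqrt real_sqrt_divide)
  qed
  have "real M powr (3/2) = real M * sqrt (real M)"
    using Mpos powr_add[of "real M" 1 "1/2"] by (simp add: powr_half_sqrt)
  then have "real M * sqrt (real M) * real q \<le> real N" using MN by simp
  then have "real M * real q \<le> real N / sqrt (real M)" using sM by (simp add: field_simps)
  then have e2: "2 * real M * real q / real N \<le> 2 * sqrt (1 / real M)"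
    using Npos sM by (simp add: field_simps real_sqrt_divide)
  have "norm (1 / real N * S) = norm S / real N" by (simp add: norm_mult norm_divide)
  also have "\<dots> \<le> norm (S - T) / real N + norm T / real N"
    using norm_triangle_ineq[of "S - T" T] Npos by (simp add: add_divide_distrib[symmetric] divide_right_mono)
  also have "\<dots> \<le> 2 * real M * real q / real N + (sqrt (1 / real M) + sqrt E1)"
    using err Tb Npos by (intro add_mono divide_right_mono) auto
  also have "\<dots> \<le> 3 * real M powr (-1/2) + sqrt E1" using e2 sq1 by simp
  finally show ?thesis unfolding S_def E1_def c_def I_def by simp
qed


definition cf :: "nat \<Rightarrow> complex \<Rightarrow> complex" where
  "cf s z = (if even s then z else cnj z)"

lemma cf_mult: "cf s (x * y) = cf s x * cf s y" by (simp add: cf_def)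
lemma norm_cf[simp]: "norm (cf s z) = norm z" by (simp add: cf_def)
lemma cf_Suc: "cf (s + 1) z = cnj (cf s z)" by (simp add: cf_def)
lemma cf_0: "cf (s + 0) z = cf s z" by simp

abbreviation Xs :: "nat \<Rightarrow> (nat \<Rightarrow> nat) set" where
  "Xs j \<equiv> PiE {1..j} (\<lambda>_. {0,1::nat})"

lemma finite_Xs: "finite (Xs j)" by (intro finite_PiE) auto

lemma a_h_alt: "a_h G j qs h n =
  (\<Prod>js\<in>Xs j. cf (\<Sum>i=1..j. js i) (G (n + (\<Sum>i=1..j. h (i, js i) * int (qs i)))))"
proof -
  have "(\<Prod>js\<in>Xs j. cf (\<Sum>i=1..j. js i) (G (n + (\<Sum>i=1..j. h (i, js i) * int (qs i))))) =
    (\<Prod>js\<in>Xs j. if even (\<Sum>i=1..j. js i) then G (n + (\<Sum>i=1..j. h (i, js i) * int (qs i)))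
        else cnj (G (n + (\<Sum>i=1..j. h (i, js i) * int (qs i)))))"
    unfolding cf_def by (rule refl)
  also have "\<dots> = a_h G j qs h n"
  proof -
    have s1: "Xs j \<inter> {js. even (\<Sum>i=1..j. js i)} = {js \<in> Xs j. even (\<Sum>i=1..j. js i)}" by blast
    have s2: "Xs j \<inter> - {js. even (\<Sum>i=1..j. js i)} = {js \<in> Xs j. odd (\<Sum>i=1..j. js i)}" by blast
    show ?thesis unfolding a_h_def prod.If_cases[OF finite_Xs] s1 s2 ..
  qed
  finally show ?thesis by (rule sym)
qed

lemma prod_Xs_Suc: "(\<Prod>js\<in>Xs (Suc j). F js) = (\<Prod>y\<in>{0,1}. \<Prod>g\<in>Xs j. F (g(Suc j := y)))"
proof -
  have e: "{1..Suc j} = insert (Suc j) {1..j}" by auto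
  have ni: "Suc j \<notin> {1..j}" by simp
  have "(\<Prod>js\<in>Xs (Suc j). F js) = (\<Prod>js\<in>(\<lambda>(y, g). g(Suc j := y)) ` ({0,1} \<times> Xs j). F js)"
    unfolding e PiE_insert_eq by simp
  also have "\<dots> = (\<Prod>p\<in>{0,1} \<times> Xs j. F ((snd p)(Suc j := fst p)))"
    using inj_combinator[OF ni, of "\<lambda>_. {0,1::nat}"]
    by (simp add: prod.reindex comp_def split_def)
  also have "\<dots> = (\<Prod>y\<in>{0,1}. \<Prod>g\<in>Xs j. F (g(Suc j := y)))"
    by (simp only: prod.cartesian_product split_def)
  finally show ?thesis .
qed

lemma a_h_Suc:
  "a_h G (Suc j) qs (h((Suc j, 0) := h0, (Suc j, 1) := h1)) n =
   a_h G j qs h (n + h0 * int (qs (Suc j))) * cnj (a_h G j qs h (n + h1 * int (qs (Suc j))))"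
proof -
  define h' where "h' = h((Suc j, 0) := h0, (Suc j, 1) := h1)"
  define T where "T = (\<lambda>js. cf (\<Sum>i=1..Suc j. js i) (G (n + (\<Sum>i=1..Suc j. h' (i, js i) * int (qs i)))))"
  define U where "U = (\<lambda>hh g. cf (\<Sum>i=1..j. g i) (G (n + hh * int (qs (Suc j)) + (\<Sum>i=1..j. h (i, g i) * int (qs i)))))"
  have e: "{1..Suc j} = insert (Suc j) {1..j}" by auto
  have s1: "(\<Sum>i=1..Suc j. (g(Suc j := y)) i) = (\<Sum>i=1..j. g i) + y" for g :: "nat \<Rightarrow> nat" and y
  proof -
    have "(\<Sum>i=1..Suc j. (g(Suc j := y)) i) = y + (\<Sum>i=1..j. (g(Suc j := y)) i)"
      unfolding e by (subst sum.insert) auto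
    also have "(\<Sum>i=1..j. (g(Suc j := y)) i) = (\<Sum>i=1..j. g i)" by (intro sum.cong) auto
    finally show ?thesis by simp
  qed
  have s2: "(\<Sum>i=1..Suc j. h' (i, (g(Suc j := y)) i) * int (qs i)) =
     (if y = 0 then h0 else h1) * int (qs (Suc j)) + (\<Sum>i=1..j. h (i, g i) * int (qs i))"
    if "y \<in> {0,1}" for g :: "nat \<Rightarrow> nat" and y
  proof -
    have "(\<Sum>i=1..Suc j. h' (i, (g(Suc j := y)) i) * int (qs i)) =
        h' (Suc j, y) * int (qs (Suc j)) + (\<Sum>i=1..j. h' (i, (g(Suc j := y)) i) * int (qs i))"
      unfolding e by (subst sum.insert) auto
    also have "(\<Sum>i=1..j. h' (i, (g(Suc j := y)) i) * int (qs i)) = (\<Sum>i=1..j. h (i, g i) * int (qs i))"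
      by (intro sum.cong) (auto simp: h'_def)
    also have "h' (Suc j, y) = (if y = 0 then h0 else h1)" using that by (auto simp: h'_def)
    finally show ?thesis .
  qed
  have s20: "(\<Sum>i=1..Suc j. h' (i, (g(Suc j := 0)) i) * int (qs i)) =
     h0 * int (qs (Suc j)) + (\<Sum>i=1..j. h (i, g i) * int (qs i))" for g :: "nat \<Rightarrow> nat"
    using s2[of 0 g] by simp
  have s21: "(\<Sum>i=1..Suc j. h' (i, (g(Suc j := 1)) i) * int (qs i)) =
     h1 * int (qs (Suc j)) + (\<Sum>i=1..j. h (i, g i) * int (qs i))" for g :: "nat \<Rightarrow> nat"
    using s2[of 1 g] by simp
  have "a_h G (Suc j) qs h' n = (\<Prod>js\<in>Xs (Suc j). T js)"
    unfolding a_h_alt T_def ..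
  also have "\<dots> = (\<Prod>y\<in>{0,1}. \<Prod>g\<in>Xs j. T (g(Suc j := y)))"
    by (rule prod_Xs_Suc)
  also have "\<dots> = (\<Prod>g\<in>Xs j. T (g(Suc j := 0))) * (\<Prod>g\<in>Xs j. T (g(Suc j := 1)))"
    by simp
  also have "(\<Prod>g\<in>Xs j. T (g(Suc j := 0))) = (\<Prod>g\<in>Xs j. U h0 g)"
    unfolding T_def U_def by (intro prod.cong refl) (simp only: s1 s20 cf_0 add.assoc)
  also have "(\<Prod>g\<in>Xs j. T (g(Suc j := 1))) = (\<Prod>g\<in>Xs j. cnj (U h1 g))"
    unfolding T_def U_def by (intro prod.cong refl) (simp only: s1 s21 cf_Suc add.assoc)
  also have "(\<Prod>g\<in>Xs j. U h0 g) = a_h G j qs h (n + h0 * int (qs (Suc j)))"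
    unfolding a_h_alt U_def ..
  also have "(\<Prod>g\<in>Xs j. cnj (U h1 g)) = cnj (a_h G j qs h (n + h1 * int (qs (Suc j))))"
    unfolding a_h_alt U_def cnj_prod ..
  finally show ?thesis unfolding h'_def .
qed

lemma a_h_mult: "a_h (\<lambda>n. P n * G n) j qs h n = a_h P j qs h n * a_h G j qs h n"
  unfolding a_h_alt cf_mult prod.distrib ..

lemma a_h_norm:
  assumes "\<And>n. norm (G n) \<le> 1"
  shows "norm (a_h G j qs h n) \<le> 1"
  unfolding a_h_alt
  by (rule order_trans[OF norm_prod_le]) (auto intro: prod_le_1 assms)

lemma a_h_per:
  assumes "\<And>n. P (n + int q) = P n"
  shows "a_h P j qs h (n + int q) = a_h P j qs h n"
  unfolding a_h_alt
proof (intro prod.cong refl)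
  fix js
  have eq: "n + int q + (\<Sum>i = 1..j. h (i, js i) * int (qs i)) = (n + (\<Sum>i = 1..j. h (i, js i) * int (qs i))) + int q"
    by simp
  show "cf (sum js {1..j}) (P (n + int q + (\<Sum>i = 1..j. h (i, js i) * int (qs i)))) =
         cf (sum js {1..j}) (P (n + (\<Sum>i = 1..j. h (i, js i) * int (qs i))))"
    by (simp only: eq assms)
qed

lemma a_h_0: "a_h G 0 qs h n = G n"
  unfolding a_h_alt by (simp add: cf_def)

lemma Hset_0: "Hset 0 M = {\<lambda>_. undefined}"
  unfolding Hset_def by simp



definition ext2 :: "(nat \<times> nat \<Rightarrow> int) \<Rightarrow> nat \<Rightarrow> int \<times> int \<Rightarrow> (nat \<times> nat \<Rightarrow> int)" where
  "ext2 h j p = h((j, 0) := fst p, (j, 1) := snd p)"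

lemma Hset_Suc_image:
  "Hset (Suc j) M = (\<lambda>(h, p). ext2 h (Suc j) p) ` (Hset j M \<times> Dset (M (Suc j)))"
proof (intro set_eqI iffI)
  fix g assume g: "g \<in> Hset (Suc j) M"
  define h where "h = g((Suc j, 0) := undefined, (Suc j, 1) := undefined)"
  define p where "p = (g (Suc j, 0), g (Suc j, 1))"
  have "g = ext2 h (Suc j) p" unfolding ext2_def h_def p_def by auto
  moreover have "h \<in> Hset j M"
    using g unfolding Hset_def h_def PiE_def extensional_def Pi_def by auto
  moreover have "p \<in> Dset (M (Suc j))"
    using g unfolding Hset_def p_def Dset_def PiE_def Pi_def by auto
  ultimately show "g \<in> (\<lambda>(h, p). ext2 h (Suc j) p) ` (Hset j M \<times> Dset (M (Suc j)))"
    by auto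
next
  fix g assume "g \<in> (\<lambda>(h, p). ext2 h (Suc j) p) ` (Hset j M \<times> Dset (M (Suc j)))"
  then obtain h p where hp: "h \<in> Hset j M" "p \<in> Dset (M (Suc j))" and g: "g = ext2 h (Suc j) p"
    by auto
  show "g \<in> Hset (Suc j) M"
    using hp unfolding g Hset_def Dset_def ext2_def PiE_def extensional_def Pi_def
    by (auto simp: le_Suc_eq)
qed

lemma Hset_Suc_inj:
  "inj_on (\<lambda>(h, p). ext2 h (Suc j) p) (Hset j M \<times> Dset (M (Suc j)))"
proof (rule inj_onI, clarify)
  fix h1 p1 h2 p2
  assume h: "h1 \<in> Hset j M" "p1 \<in> Dset (M (Suc j))" "h2 \<in> Hset j M" "p2 \<in> Dset (M (Suc j))"
    and eq: "ext2 h1 (Suc j) p1 = ext2 h2 (Suc j) p2"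
  have "p1 = p2"
    using fun_cong[OF eq, of "(Suc j, 0)"] fun_cong[OF eq, of "(Suc j, 1)"]
    unfolding ext2_def by (simp add: prod_eq_iff)
  moreover have "h1 = h2"
  proof
    fix x
    show "h1 x = h2 x"
    proof (cases "x \<in> {1..j} \<times> {0,1}")
      case True
      then have "x \<noteq> (Suc j, 0)" "x \<noteq> (Suc j, 1)" by auto
      then show ?thesis using fun_cong[OF eq, of x] unfolding ext2_def by simp
    next
      case False
      have "h1 \<in> extensional ({1..j} \<times> {0,1})" "h2 \<in> extensional ({1..j} \<times> {0,1})"
        using h unfolding Hset_def PiE_def by auto
      then show ?thesis using False extensional_arb by metis
    qed
  qed
  ultimately show "h1 = h2 \<and> p1 = p2" by simp
qed

lemma sum_Hset_Suc:
  "(\<Sum>g\<in>Hset (Suc j) M. F g) = (\<Sum>h\<in>Hset j M. \<Sum>p\<in>Dset (M (Suc j)). F (ext2 h (Suc j) p))"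
  unfolding Hset_Suc_image
  by (subst sum.reindex[OF Hset_Suc_inj]) (simp add: sum.cartesian_product split_def)

lemma finite_Hset: "finite (Hset j M)"
proof -
  have "Hset j M \<subseteq> PiE ({1..j} \<times> {0,1}) (\<lambda>(i,j). {1 .. int (M i)})"
    unfolding Hset_def by auto
  moreover have "finite (PiE ({1..j} \<times> {0,1::nat}) (\<lambda>(i,j). {1 .. int (M i)}))"
    by (intro finite_PiE) auto
  ultimately show ?thesis by (rule finite_subset)
qed

lemma card_Dset: "card (Dset m) \<le> m ^ 2"
proof -
  have "card (Dset m) \<le> card ({1..int m} \<times> {1..int m})"
    unfolding Dset_def by (intro card_mono) auto
  then show ?thesis by (simp add: card_cartesian_product power2_eq_square)
qed

lemma card_Hset: "real (card (Hset j M)) \<le> (\<Prod>i=1..j. real (M i) ^ 2)"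
proof (induction j)
  case 0
  then show ?case by (simp add: Hset_def)
next
  case (Suc j)
  have "card (Hset (Suc j) M) = card (Hset j M \<times> Dset (M (Suc j)))"
    unfolding Hset_Suc_image by (rule card_image[OF Hset_Suc_inj])
  also have "\<dots> = card (Hset j M) * card (Dset (M (Suc j)))"
    by (rule card_cartesian_product)
  finally have "real (card (Hset (Suc j) M)) = real (card (Hset j M)) * real (card (Dset (M (Suc j))))"
    by simp
  also have "\<dots> \<le> (\<Prod>i=1..j. real (M i) ^ 2) * real (M (Suc j)) ^ 2"
    using card_Dset[of "M (Suc j)"]
    by (intro mult_mono Suc.IH) (auto simp flip: of_nat_power intro: prod_nonneg)
  also have "\<dots> = (\<Prod>i=1..Suc j. real (M i) ^ 2)"
    by simp
  finally show ?case .
qed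

lemma avg_sqrt:
  fixes x :: "'a \<Rightarrow> real"
  assumes fin: "finite A" and nn: "\<And>a. a \<in> A \<Longrightarrow> x a \<ge> 0" and P: "real (card A) \<le> P" and Ppos: "P > 0"
  shows "1 / P * (\<Sum>a\<in>A. sqrt (x a)) \<le> sqrt (1 / P * (\<Sum>a\<in>A. x a))"
proof (rule real_le_rsqrt)
  have "(\<Sum>a\<in>A. sqrt (x a))\<^sup>2 \<le> (\<Sum>a\<in>A. (sqrt (x a))\<^sup>2) * real (card A)"
    by (rule sum_squared_le_sum_of_squares)
  also have "(\<Sum>a\<in>A. (sqrt (x a))\<^sup>2) = (\<Sum>a\<in>A. x a)"
    using nn by (intro sum.cong) auto
  also have "(\<Sum>a\<in>A. x a) * real (card A) \<le> (\<Sum>a\<in>A. x a) * P"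
    using P nn by (intro mult_left_mono sum_nonneg) auto
  finally have "(\<Sum>a\<in>A. sqrt (x a))\<^sup>2 \<le> (\<Sum>a\<in>A. x a) * P" .
  then have "(\<Sum>a\<in>A. sqrt (x a))\<^sup>2 / P ^ 2 \<le> (\<Sum>a\<in>A. x a) * P / P ^ 2"
    using Ppos by (intro divide_right_mono) auto
  then show "(1 / P * (\<Sum>a\<in>A. sqrt (x a)))\<^sup>2 \<le> 1 / P * (\<Sum>a\<in>A. x a)"
    using Ppos by (simp add: power2_eq_square field_simps)
qed

lemma powr_half_iter: "0 \<le> x \<Longrightarrow> x powr (1 / 2 ^ Suc j) = sqrt (x powr (1 / 2 ^ j))"
  using powr_half_sqrt_powr[of x "1 / 2 ^ j"] by (simp add: mult.commute)

lemma powr_subadd: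
  fixes a b :: real
  assumes "0 \<le> a" "0 \<le> b"
  shows "(a + b) powr (1 / 2 ^ j) \<le> a powr (1 / 2 ^ j) + b powr (1 / 2 ^ j)"
proof (induction j)
  case 0
  then show ?case using assms by simp
next
  case (Suc j)
  have "(a + b) powr (1 / 2 ^ Suc j) = sqrt ((a + b) powr (1 / 2 ^ j))"
    using assms by (intro powr_half_iter) simp
  also have "\<dots> \<le> sqrt (a powr (1 / 2 ^ j) + b powr (1 / 2 ^ j))"
    using Suc by simp
  also have "\<dots> \<le> sqrt (a powr (1 / 2 ^ j)) + sqrt (b powr (1 / 2 ^ j))"
    by (intro sqrt_add_le_add_sqrt) auto
  also have "\<dots> = a powr (1 / 2 ^ Suc j) + b powr (1 / 2 ^ Suc j)"
    using assms powr_half_iter[of a j] powr_half_iter[of b j] by simp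
  finally show ?case .
qed

lemma chain:
  fixes x c :: "nat \<Rightarrow> real"
  assumes nn: "\<And>j. j \<le> k \<Longrightarrow> x j \<ge> 0" and cnn: "\<And>j. c j \<ge> 0"
    and step: "\<And>j. j < k \<Longrightarrow> x j \<le> c (Suc j) + sqrt (x (Suc j))"
  shows "x 0 \<le> (\<Sum>i=1..k. c i powr (1 / 2 ^ (i - 1))) + x k powr (1 / 2 ^ k)"
proof -
  have "j \<le> k \<Longrightarrow> x 0 \<le> (\<Sum>i=1..j. c i powr (1 / 2 ^ (i - 1))) + x j powr (1 / 2 ^ j)" for j
  proof (induction j)
    case 0
    then show ?case using nn[of 0] by simp
  next
    case (Suc j)
    then have jk: "j < k" by simp
    have "x j powr (1 / 2 ^ j) \<le> (c (Suc j) + sqrt (x (Suc j))) powr (1 / 2 ^ j)"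
      using step[OF jk] nn[of j] jk by (intro powr_mono2) auto
    also have "\<dots> \<le> c (Suc j) powr (1 / 2 ^ j) + sqrt (x (Suc j)) powr (1 / 2 ^ j)"
      using cnn nn[of "Suc j"] Suc.prems by (intro powr_subadd) auto
    also have "sqrt (x (Suc j)) powr (1 / 2 ^ j) = x (Suc j) powr (1 / 2 ^ Suc j)"
    proof -
      have "sqrt (x (Suc j)) = x (Suc j) powr (1/2)" using nn[of "Suc j"] Suc.prems by (simp add: powr_half_sqrt)
      then show ?thesis using nn[of "Suc j"] Suc.prems by (simp add: powr_powr)
    qed
    finally have "x j powr (1 / 2 ^ j) \<le> c (Suc j) powr (1 / 2 ^ j) + x (Suc j) powr (1 / 2 ^ Suc j)" .
    then show ?case using Suc.IH jk by simp
  qed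
  then show ?thesis by simp
qed

lemma Ebold_nn: "Ebold G j qs M I N \<ge> 0"
  unfolding Ebold_def by (intro mult_nonneg_nonneg sum_nonneg divide_nonneg_nonneg prod_nonneg) auto

lemma E_step:
  fixes P G :: "int \<Rightarrow> complex" and qs M :: "nat \<Rightarrow> nat"
  assumes Pper: "\<And>n. P (n + int (qs (Suc j))) = P n" and Pb: "\<And>n. norm (P n) \<le> 1"
    and Gb: "\<And>n. norm (G n) \<le> 1"
    and Mpos: "\<And>i. i \<in> {1..Suc j} \<Longrightarrow> M i \<ge> 1"
    and MN: "real (M (Suc j)) powr (3/2) * real (qs (Suc j)) \<le> real N" and Npos: "N > 0"
  shows "Ebold (\<lambda>n. P n * G n) j qs M (intv m N) N
           \<le> 3 * real (M (Suc j)) powr (-1/2) + sqrt (Ebold G (Suc j) qs M (intv m N) N)"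
proof -
  define Pj where "Pj = (\<Prod>i=1..j. real (M i) ^ 2)"
  define Mj where "Mj = M (Suc j)"
  define q where "q = qs (Suc j)"
  define I where "I = intv m N"
  define E1 where "E1 = (\<lambda>h. 1 / real Mj ^ 2 * (\<Sum>p\<in>Dset Mj. norm (1 / real N *
        (\<Sum>n\<in>I. a_h G j qs h (n + fst p * int q) * cnj (a_h G j qs h (n + snd p * int q))))))"
  define c3 where "c3 = 3 * real Mj powr (-1/2)"
  have Pjpos: "Pj > 0" unfolding Pj_def using Mpos by (intro prod_pos) force
  have Mj1: "Mj \<ge> 1" unfolding Mj_def using Mpos by simp
  have c3nn: "c3 \<ge> 0" unfolding c3_def by simp
  have E1nn: "E1 h \<ge> 0" for h unfolding E1_def by (intro mult_nonneg_nonneg sum_nonneg) auto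
  have each: "norm (1 / real N * (\<Sum>n\<in>I. a_h (\<lambda>n. P n * G n) j qs h n)) \<le> c3 + sqrt (E1 h)" for h
    unfolding a_h_mult E1_def c3_def I_def
    by (rule vdc[where f="a_h P j qs h" and b="a_h G j qs h" and q=q])
       (auto intro: a_h_per a_h_norm Pb Gb Npos simp: Pper q_def MN[folded Mj_def] Mj1[unfolded One_nat_def])
  have "Ebold (\<lambda>n. P n * G n) j qs M I N = 1 / Pj * (\<Sum>h\<in>Hset j M. norm (1 / real N * (\<Sum>n\<in>I. a_h (\<lambda>n. P n * G n) j qs h n)))"
    unfolding Ebold_def Pj_def ..
  also have "\<dots> \<le> 1 / Pj * (\<Sum>h\<in>Hset j M. c3 + sqrt (E1 h))"
    using Pjpos by (intro mult_left_mono sum_mono each) auto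
  also have "\<dots> = real (card (Hset j M)) / Pj * c3 + 1 / Pj * (\<Sum>h\<in>Hset j M. sqrt (E1 h))"
    by (simp add: sum.distrib field_simps add_divide_distrib)
  also have "\<dots> \<le> 1 * c3 + sqrt (1 / Pj * (\<Sum>h\<in>Hset j M. E1 h))"
  proof (intro add_mono mult_right_mono avg_sqrt)
    show "real (card (Hset j M)) / Pj \<le> 1"
      using card_Hset[of j M] Pjpos unfolding Pj_def by simp
  qed (auto simp: c3nn finite_Hset E1nn Pjpos card_Hset[of j M, folded Pj_def])
  also have "1 / Pj * (\<Sum>h\<in>Hset j M. E1 h) = Ebold G (Suc j) qs M I N"
  proof -
    have "Ebold G (Suc j) qs M I N = 1 / (Pj * real Mj ^ 2) *
        (\<Sum>h\<in>Hset j M. \<Sum>p\<in>Dset Mj. norm (1 / real N * (\<Sum>n\<in>I. a_h G (Suc j) qs (ext2 h (Suc j) p) n)))"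
      unfolding Ebold_def Pj_def Mj_def sum_Hset_Suc by simp
    also have "\<dots> = 1 / Pj * (\<Sum>h\<in>Hset j M. E1 h)"
      unfolding E1_def ext2_def a_h_Suc q_def
      by (simp add: sum_distrib_left)
    finally show ?thesis by simp
  qed
  finally show ?thesis unfolding c3_def Mj_def I_def by simp
qed

lemma Mpar_bound:
  assumes "qj > 0"
  shows "real (Mpar N qj) powr (3/2) * real qj \<le> real N"
proof -
  define x where "x = (real N / real qj) powr (2/3)"
  have xnn: "x \<ge> 0" unfolding x_def by simp
  have "real (Mpar N qj) = real_of_int \<lfloor>x\<rfloor>"
    unfolding Mpar_def x_def using xnn x_def by simp
  also have "\<dots> \<le> x" by simp
  finally have le: "real (Mpar N qj) \<le> x" .
  have "real (Mpar N qj) powr (3/2) \<le> x powr (3/2)"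
    using le by (intro powr_mono2) auto
  also have "x powr (3/2) = real N / real qj"
    unfolding x_def by (simp add: powr_powr)
  finally show ?thesis using assms by (simp add: field_simps)
qed

theorem proposition6p4:
  fixes q :: nat and a :: "nat \<Rightarrow> int \<Rightarrow> complex"
    and k :: nat and qs :: "nat \<Rightarrow> nat" and Q :: nat
    and m :: int and N :: nat
  assumes q_pos: "q > 0"
    and period: "\<And>d n. d dvd q \<Longrightarrow> a d (n + int d) = a d n"
    and bounded: "\<And>d n. d dvd q \<Longrightarrow> norm (a d n) \<le> 1"
    and mult: "\<And>d1 d2 n. d1 * d2 dvd q \<Longrightarrow> coprime d1 d2 \<Longrightarrow>
                 a (d1 * d2) n = a d1 n * a d2 n"
    and decomp: "q = (\<Prod>i=1..k. qs i) * Q"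
    and cop_qs: "\<And>i j. i \<in> {1..k} \<Longrightarrow> j \<in> {1..k} \<Longrightarrow> i \<noteq> j \<Longrightarrow> coprime (qs i) (qs j)"
    and cop_Q: "\<And>i. i \<in> {1..k} \<Longrightarrow> coprime (qs i) Q"
    and N_pos: "N > 0"
    and M_pos: "\<And>j. j \<in> {1..k} \<Longrightarrow> Mpar N (qs j) \<ge> 1"
  shows "norm ((1 / real N) * (\<Sum>n\<in>intv m N. a q n))
           \<le> 4 * (\<Sum>i=1..k. real (Mpar N (qs i)) powr (- (1 / 2 ^ i)))
             + 4 * Ebold (a Q) k qs (\<lambda>i. Mpar N (qs i)) (intv m N) N powr (1 / 2 ^ k)"
proof -
  define Mf where "Mf = (\<lambda>i. Mpar N (qs i))"
  have prodnz: "(\<Prod>i=1..k. qs i) \<noteq> 0" and Qnz: "Q \<noteq> 0" using q_pos decomp by auto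
  have qspos: "qs i > 0" if "i \<in> {1..k}" for i
    using prodnz that by (auto simp: prod_zero_iff)
  have dvd_qs: "qs i dvd q" if "i \<in> {1..k}" for i
    unfolding decomp using that by (intro dvd_mult2 dvd_prodI) auto
  have dvd_Q: "Q dvd q" unfolding decomp by simp
  have MN: "real (Mf i) powr (3/2) * real (qs i) \<le> real N" if "i \<in> {1..k}" for i
    unfolding Mf_def using qspos[OF that] by (rule Mpar_bound)
  have amul: "a ((\<Prod>i\<in>S. qs i) * Q) n = (\<Prod>i\<in>S. a (qs i) n) * a Q n" if "S \<subseteq> {1..k}" for S n
  proof -
    have "finite S" using that finite_subset by blast
    then show ?thesis using that
    proof (induction S rule: finite_induct)
      case empty then show ?case by simp
    next
      case (insert x S)
      have xk: "x \<in> {1..k}" and Sk: "S \<subseteq> {1..k}" using insert.prems by auto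
      have eq1: "(\<Prod>i\<in>insert x S. qs i) * Q = qs x * ((\<Prod>i\<in>S. qs i) * Q)"
        using insert.hyps by simp
      have dv: "qs x * ((\<Prod>i\<in>S. qs i) * Q) dvd q"
      proof -
        have "(\<Prod>i\<in>insert x S. qs i) dvd (\<Prod>i=1..k. qs i)"
          using insert.prems by (intro prod_dvd_prod_subset) auto
        then have "(\<Prod>i\<in>insert x S. qs i) * Q dvd q" unfolding decomp by simp
        then show ?thesis unfolding eq1 .
      qed
      have cp: "coprime (qs x) ((\<Prod>i\<in>S. qs i) * Q)"
        using insert.hyps xk Sk by (auto intro!: prod_coprime_right cop_qs cop_Q)
      have "a ((\<Prod>i\<in>insert x S. qs i) * Q) n = a (qs x * ((\<Prod>i\<in>S. qs i) * Q)) n"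
        by (simp only: eq1)
      also have "\<dots> = a (qs x) n * a ((\<Prod>i\<in>S. qs i) * Q) n"
        by (rule mult[OF dv cp])
      finally have "a ((\<Prod>i\<in>insert x S. qs i) * Q) n = a (qs x) n * a ((\<Prod>i\<in>S. qs i) * Q) n" .
      then show ?case using insert.IH[OF Sk] insert.hyps by (simp add: mult.assoc)
    qed
  qed
  define F where "F = (\<lambda>j n. (\<Prod>i\<in>{Suc j..k}. a (qs i) n) * a Q n)"
  define x where "x = (\<lambda>j. Ebold (F j) j qs Mf (intv m N) N)"
  have Fb: "norm (F j n) \<le> 1" for j n
  proof -
    have "norm (\<Prod>i\<in>{Suc j..k}. a (qs i) n) \<le> 1"
      by (rule order_trans[OF norm_prod_le]) (auto intro!: prod_le_1 bounded dvd_qs)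
    then show ?thesis unfolding F_def norm_mult
      using bounded[OF dvd_Q, of n] by (simp add: mult_le_one)
  qed
  have xstep: "x j \<le> 3 * real (Mf (Suc j)) powr (-1/2) + sqrt (x (Suc j))" if "j < k" for j
  proof -
    have Fj: "F j = (\<lambda>n. a (qs (Suc j)) n * F (Suc j) n)"
      unfolding F_def using that by (auto simp: prod.atLeast_Suc_atMost mult.assoc)
    have sk: "Suc j \<in> {1..k}" using that by simp
    have mp: "\<And>i. i \<in> {1..Suc j} \<Longrightarrow> Mf i \<ge> 1" using M_pos that unfolding Mf_def by auto
    have mn: "real (Mf (Suc j)) powr (3/2) * real (qs (Suc j)) \<le> real N" by (rule MN[OF sk])
    show ?thesis unfolding x_def Fj
      by (rule E_step[where P="a (qs (Suc j))" and G="F (Suc j)" and M=Mf and j=j and qs=qs and N=N and m=m, OF _ _ _ mp mn N_pos]) (auto intro: period dvd_qs[OF sk] bounded Fb)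
  qed
  have x0: "x 0 = norm ((1 / real N) * (\<Sum>n\<in>intv m N. a q n))"
  proof -
    have "F 0 = a q" unfolding F_def using amul[of "{1..k}"] decomp by auto
    then show ?thesis unfolding x_def Ebold_def by (simp add: Hset_0 a_h_0)
  qed
  have xk: "x k = Ebold (a Q) k qs Mf (intv m N) N"
  proof -
    have "F k = a Q" unfolding F_def by auto
    then show ?thesis unfolding x_def by simp
  qed
  define c where "c = (\<lambda>i. 3 * real (Mf i) powr (-1/2))"
  have ch: "x 0 \<le> (\<Sum>i=1..k. c i powr (1 / 2 ^ (i - 1))) + x k powr (1 / 2 ^ k)"
  proof (rule chain)
    fix j assume "j < k"
    then show "x j \<le> c (Suc j) + sqrt (x (Suc j))" unfolding c_def by (rule xstep)
  qed (auto simp: x_def Ebold_nn c_def)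
  have ci: "c i powr (1 / 2 ^ (i - 1)) \<le> 3 * real (Mf i) powr (- (1 / 2 ^ i))" if "i \<in> {1..k}" for i
  proof -
    have i2: "(2::real) ^ i = 2 * 2 ^ (i - 1)" using that by (cases i) auto
    have "c i powr (1 / 2 ^ (i - 1)) = 3 powr (1 / 2 ^ (i - 1)) * (real (Mf i) powr (-1/2)) powr (1 / 2 ^ (i - 1))"
      unfolding c_def by (simp add: powr_mult)
    also have "(real (Mf i) powr (-1/2)) powr (1 / 2 ^ (i - 1)) = real (Mf i) powr (- (1 / 2 ^ i))"
      by (simp add: powr_powr i2)
    also have "3 powr (1 / 2 ^ (i - 1)) \<le> (3::real) powr 1"
      by (intro powr_mono) auto
    finally show ?thesis by (simp add: mult_right_mono)
  qed
  have "norm ((1 / real N) * (\<Sum>n\<in>intv m N. a q n)) \<le>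
      (\<Sum>i=1..k. c i powr (1 / 2 ^ (i - 1))) + x k powr (1 / 2 ^ k)"
    using ch x0 by simp
  also have "\<dots> \<le> (\<Sum>i=1..k. 4 * real (Mf i) powr (- (1 / 2 ^ i))) + 4 * x k powr (1 / 2 ^ k)"
  proof (intro add_mono sum_mono)
    fix i assume "i \<in> {1..k}"
    then show "c i powr (1 / 2 ^ (i - 1)) \<le> 4 * real (Mf i) powr (- (1 / 2 ^ i))"
      using ci[of i] powr_ge_zero[of "real (Mf i)" "- (1 / 2 ^ i)"] by linarith
  qed simp
  finally show ?thesis unfolding xk Mf_def by (simp add: sum_distrib_left)
qed

end
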